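(* Let $d\ge 2$ and let $B$ be the bilinear spherical averaging operator on $\mathbb{R}^d$ (defined in the context). Then for every $s\in[\frac12,1]$ there is a constant $C$ such that $$\|B(f,g)\|_{L^s(\mathbb{R}^d)}\le C\,\|f\|_{L^1(\mathbb{R}^d)}\|g\|_{L^1(\mathbb{R}^d)}\quad\text{for all } f,g\in L^1(\mathbb{R}^d).$$
   Context: Write points of $\mathbb{R}^{2d}$ as $(u_1,u_2)$ with $u_1,u_2\in\mathbb{R}^d$, and let $\sigma$ be the surface measure on the unit sphere $S^{2d-1}\subseteq\mathbb{R}^{2d}$. The bilinear spherical averaging operator is $$B(f,g)(x)=\int_{S^{2d-1}} f(x-u_1)\,g(x-u_2)\,d\sigma(u_1,u_2),\qquad x\in\mathbb{R}^d.$$ *)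

theory Defs
  imports "HOL-Analysis.Analysis"
begin

text \<open>Surface measure on the unit sphere of a Euclidean space of dimension n, via the
  cone construction: sigma(A) = n * lambda({r u. 0 < r \<le> 1, u \<in> A}), i.e. the push-forward of
  n times Lebesgue measure on the unit ball under y \<mapsto> y / |y|.\<close>
definition sphere_surface_measure :: "'a::euclidean_space measure" where
  "sphere_surface_measure =
     distr (density lborel (\<lambda>y. ennreal (real DIM('a)) * indicator (ball 0 1) y)) borel
       (\<lambda>y. y /\<^sub>R norm y)"

text \<open>Bilinear spherical averaging operator on R^d; points of R^(2d) are pairs (u1,u2).\<close>
definition bilinear_spherical_avg ::
  "(real^'n \<Rightarrow> real) \<Rightarrow> (real^'n \<Rightarrow> real) \<Rightarrow> real^'n \<Rightarrow> real" where
  "bilinear_spherical_avg f g x =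
     (\<integral>u. f (x - fst u) * g (x - snd u) \<partial>(sphere_surface_measure :: ((real^'n) \<times> (real^'n)) measure))"

definition Ls_norm_pow :: "real \<Rightarrow> (real^'n \<Rightarrow> real) \<Rightarrow> ennreal" where
  "Ls_norm_pow s h = (\<integral>\<^sup>+ x. ennreal (\<bar>h x\<bar> powr s) \<partial>lborel)"

definition L1_norm :: "(real^'n \<Rightarrow> real) \<Rightarrow> real" where
  "L1_norm h = (\<integral>x. \<bar>h x\<bar> \<partial>lborel)"

end

theory Submission
  imports Defs
begin

lemma lessThan_generator_eq:
  fixes M N :: "real measure"
  assumes sets: "sets M = sets borel" "sets N = sets borel"
  assumes fin: "\<And>x. emeasure M {..< x} < \<infinity>"
  assumes eq: "\<And>x. emeasure M {..< x} = emeasure N {..< x}"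
  shows "M = N"
proof (rule measure_eqI_generator_eq_countable)
  let ?LT = "\<lambda>a::real. {..< a}" let ?E = "range ?LT"
  show "Int_stable ?E"
  proof (clarsimp simp: Int_stable_def)
    fix a b :: real show "{..<a} \<inter> {..<b} \<in> range lessThan"
      by (rule image_eqI[of _ _ "min a b"]) auto
  qed
  show "?E \<subseteq> Pow UNIV" "sets M = sigma_sets UNIV ?E" "sets N = sigma_sets UNIV ?E"
    unfolding sets borel_Iio by auto
  show "range (\<lambda>n::nat. ?LT (real n)) \<subseteq> ?E" by auto
  show "(\<Union> (range (\<lambda>n::nat. ?LT (real n)))) = UNIV"
    by (auto intro: reals_Archimedean2)
  show "\<And>a. a \<in> range (\<lambda>n::nat. ?LT (real n)) \<Longrightarrow> emeasure M a \<noteq> \<infinity>"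
    using fin by (auto simp: less_top)
qed (auto simp: eq)

lemma integral_powr_interval:
  fixes e c x :: real
  assumes e: "e > -1" and x: "x > 0" and c: "c \<ge> 0"
  shows "(\<integral>\<^sup>+ u. ennreal (c * u powr e) * indicator {0<..} u * indicator {..<x} u \<partial>lborel)
        = ennreal (c * x powr (e+1) / (e+1))"
proof -
  have "((\<lambda>u. c * u powr e) has_integral (c * (x powr (e+1) / (e+1)))) {0..x}"
    using has_integral_powr_from_0[OF e, of x] x by (intro has_integral_mult_right) auto
  hence "((\<lambda>u. if u \<in> {0..x} then c * u powr e else 0) has_integral (c * (x powr (e+1) / (e+1)))) UNIV"
    by (rule iffD2[OF has_integral_restrict_UNIV])
  hence I: "((\<lambda>u. c * u powr e * indicator {0<..} u * indicator {..<x} u) has_integral (c * (x powr (e+1) / (e+1)))) UNIV"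
  proof (rule has_integral_spike[rotated 2])
    show "negligible {0, x}" by simp
  qed (auto simp: indicator_def)
  have "(\<integral>\<^sup>+ u. ennreal (c * u powr e * indicator {0<..} u * indicator {..<x} u) \<partial>lborel)
        = ennreal (c * (x powr (e+1) / (e+1)))"
    by (rule nn_integral_has_integral_lborel[OF _ _ I]) (auto simp: indicator_def c)
  moreover have "(\<integral>\<^sup>+ u. ennreal (c * u powr e) * indicator {0<..} u * indicator {..<x} u \<partial>lborel)
     = (\<integral>\<^sup>+ u. ennreal (c * u powr e * indicator {0<..} u * indicator {..<x} u) \<partial>lborel)"
    by (intro nn_integral_cong) (auto simp: indicator_def)
  ultimately show ?thesis by simp
qed

lemma sqrt_pow_powr: "x > 0 \<Longrightarrow> sqrt x ^ n = x powr (real n / 2)"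
  by (simp add: powr_half_sqrt_powr powr_realpow real_sqrt_power)

lemma distr_norm_sq:
  "distr (lborel::'a::euclidean_space measure) borel (\<lambda>q. (norm q)^2) =
   density lborel (\<lambda>u. ennreal (unit_ball_vol (DIM('a)) * DIM('a) / 2 * u powr (DIM('a)/2 - 1)) * indicator {0<..} u)"
  (is "?M = ?N")
proof (rule lessThan_generator_eq)
  let ?D = "real DIM('a)" let ?V = "unit_ball_vol ?D"
  have M: "emeasure ?M {..<x} = (if x \<le> 0 then 0 else ennreal (?V * x powr (?D/2)))" for x
  proof -
    have "emeasure ?M {..<x} = emeasure lborel ((\<lambda>q::'a. (norm q)^2) -` {..<x})"
      by (subst emeasure_distr) auto
    also have "(\<lambda>q::'a. (norm q)^2) -` {..<x} = (if x \<le> 0 then {} else ball 0 (sqrt x))"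
    proof (cases "x \<le> 0")
      case True
      have "\<not> (norm q)^2 < x" for q :: 'a
        using True zero_le_power2[of "norm q"] by linarith
      thus ?thesis using True by auto
    next
      case False
      have "(norm q)^2 < x \<longleftrightarrow> norm q < sqrt x" for q :: 'a
        by (metis abs_norm_cancel real_sqrt_abs real_sqrt_less_iff)
      thus ?thesis using False by (auto simp: mem_ball_0)
    qed
    finally show ?thesis using emeasure_ball[of "sqrt x" 0]
      by (auto simp: sqrt_pow_powr)
  qed
  show "emeasure ?M {..<x} < \<infinity>" for x by (simp add: M)
  show "emeasure ?M {..<x} = emeasure ?N {..<x}" for x
  proof (cases "x \<le> 0")
    case True
    have "emeasure ?N {..<x} = 0"
    proof -
      have "emeasure ?N {..<x} = (\<integral>\<^sup>+ u. ennreal (?V * ?D / 2 * u powr (?D/2 - 1)) * indicator {0<..} u * indicator {..<x} u \<partial>lborel)"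
        by (rule emeasure_density) auto
      also have "\<dots> = (\<integral>\<^sup>+ (u::real). 0 \<partial>lborel)"
        using True by (intro nn_integral_cong) (auto simp: indicator_def)
      finally show ?thesis by simp
    qed
    thus ?thesis using True by (simp add: M)
  next
    case False
    have "emeasure ?N {..<x} = (\<integral>\<^sup>+ u. ennreal (?V * ?D / 2 * u powr (?D/2 - 1)) * indicator {0<..} u * indicator {..<x} u \<partial>lborel)"
      by (rule emeasure_density) auto
    also have "\<dots> = ennreal (?V * ?D / 2 * x powr (?D/2 - 1 + 1) / (?D/2 - 1 + 1))"
      using False DIM_positive[where 'a='a]
      by (intro integral_powr_interval) auto
    also have "\<dots> = ennreal (?V * x powr (?D/2))"
      using DIM_positive[where 'a='a] by simp
    finally show ?thesis using False by (simp add: M)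
  qed
qed auto

lemma nn_integral_translate:
  fixes f :: "'a::euclidean_space \<Rightarrow> ennreal"
  assumes [measurable]: "f \<in> borel_measurable borel"
  shows "(\<integral>\<^sup>+ x. f x \<partial>lborel) = (\<integral>\<^sup>+ x. f (c + x) \<partial>lborel)"
proof -
  have "(\<integral>\<^sup>+ x. f x \<partial>(distr lborel borel ((+) c))) = (\<integral>\<^sup>+ x. f (c + x) \<partial>lborel)"
    by (rule nn_integral_distr) auto
  thus ?thesis by (simp add: lborel_distr_plus)
qed

lemma nn_integral_scale:
  fixes f :: "'a::euclidean_space \<Rightarrow> ennreal"
  assumes [measurable]: "f \<in> borel_measurable borel" and c: "c \<noteq> 0"
  shows "(\<integral>\<^sup>+ x. f x \<partial>lborel) = ennreal (\<bar>c\<bar> ^ DIM('a)) * (\<integral>\<^sup>+ x. f (c *\<^sub>R x) \<partial>lborel)"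
proof -
  have "(\<integral>\<^sup>+ x. f x \<partial>lborel) = (\<integral>\<^sup>+ x. f x \<partial>(density (distr lborel borel (\<lambda>x. 0 + c *\<^sub>R x)) (\<lambda>_. \<bar>c\<bar>^DIM('a))))"
    using lborel_affine[where t="0::'a", OF c] by simp
  also have "\<dots> = (\<integral>\<^sup>+ x. ennreal (\<bar>c\<bar>^DIM('a)) * f x \<partial>(distr lborel borel (\<lambda>x. 0 + c *\<^sub>R x)))"
    by (subst nn_integral_density) auto
  also have "\<dots> = (\<integral>\<^sup>+ x. ennreal (\<bar>c\<bar>^DIM('a)) * f (c *\<^sub>R x) \<partial>lborel)"
    by (subst nn_integral_distr) auto
  also have "\<dots> = ennreal (\<bar>c\<bar> ^ DIM('a)) * (\<integral>\<^sup>+ x. f (c *\<^sub>R x) \<partial>lborel)"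
    by (rule nn_integral_cmult) auto
  finally show ?thesis .
qed

lemma nn_integral_norm_sq:
  fixes \<Phi> :: "real \<Rightarrow> ennreal"
  assumes [measurable]: "\<Phi> \<in> borel_measurable borel"
  shows "(\<integral>\<^sup>+ (q::'a::euclidean_space). \<Phi> ((norm q)^2) \<partial>lborel) =
    (\<integral>\<^sup>+ u. ennreal (unit_ball_vol (DIM('a)) * DIM('a) / 2 * u powr (DIM('a)/2 - 1)) * indicator {0<..} u * \<Phi> u \<partial>lborel)"
  (is "_ = ?R")
proof -
  have "(\<integral>\<^sup>+ (q::'a). \<Phi> ((norm q)^2) \<partial>lborel) = (\<integral>\<^sup>+ u. \<Phi> u \<partial>(distr (lborel::'a measure) borel (\<lambda>q. (norm q)^2)))"
    by (subst nn_integral_distr) auto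
  also have "\<dots> = (\<integral>\<^sup>+ u. \<Phi> u \<partial>(density lborel (\<lambda>u. ennreal (unit_ball_vol (DIM('a)) * DIM('a) / 2 * u powr (DIM('a)/2 - 1)) * indicator {0<..} u)))"
    by (simp only: distr_norm_sq)
  also have "\<dots> = ?R"
    by (subst nn_integral_density) auto
  finally show ?thesis .
qed

lemma nn_integral_norm_sq_le:
  fixes \<Phi> :: "real \<Rightarrow> ennreal"
  assumes [measurable]: "\<Phi> \<in> borel_measurable borel" and D: "DIM('a) \<ge> 2"
    and vanish: "\<And>u. u \<ge> 1 \<Longrightarrow> \<Phi> u = 0"
  shows "(\<integral>\<^sup>+ (q::'a::euclidean_space). \<Phi> ((norm q)^2) \<partial>lborel) \<le>
    ennreal (unit_ball_vol (DIM('a)) * DIM('a) / 2) * (\<integral>\<^sup>+ u. \<Phi> u * indicator {0<..} u \<partial>lborel)"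
proof -
  let ?c = "unit_ball_vol (DIM('a)) * DIM('a) / 2"
  have "(\<integral>\<^sup>+ (q::'a). \<Phi> ((norm q)^2) \<partial>lborel) =
    (\<integral>\<^sup>+ u. ennreal (?c * u powr (DIM('a)/2 - 1)) * indicator {0<..} u * \<Phi> u \<partial>lborel)"
    by (rule nn_integral_norm_sq) auto
  also have "\<dots> \<le> (\<integral>\<^sup>+ u. ennreal ?c * (\<Phi> u * indicator {0<..} u) \<partial>lborel)"
  proof (rule nn_integral_mono)
    fix u :: real
    show "ennreal (?c * u powr (DIM('a)/2 - 1)) * indicator {0<..} u * \<Phi> u \<le> ennreal ?c * (\<Phi> u * indicator {0<..} u)"
    proof (cases "0 < u \<and> u < 1")
      case True
      have "u powr (DIM('a)/2 - 1) \<le> 1"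
        using True D by (intro powr_le1) auto
      hence "?c * u powr (DIM('a)/2 - 1) \<le> ?c"
        by (intro mult_left_le) auto
      hence "ennreal (?c * u powr (DIM('a)/2 - 1)) \<le> ennreal ?c" by (rule ennreal_leI)
      hence "ennreal (?c * u powr (DIM('a)/2 - 1)) * \<Phi> u \<le> ennreal ?c * \<Phi> u"
        by (rule mult_right_mono) simp
      moreover have "ennreal (?c * u powr (DIM('a)/2 - 1)) * indicator {0<..} u * \<Phi> u = ennreal (?c * u powr (DIM('a)/2 - 1)) * \<Phi> u"
        using True by (simp add: indicator_def)
      moreover have "ennreal ?c * (\<Phi> u * indicator {0<..} u) = ennreal ?c * \<Phi> u"
        using True by (simp add: indicator_def)
      ultimately show ?thesis by simp
    next
      case False
      thus ?thesis using vanish[of u] by (auto simp: indicator_def)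
    qed
  qed
  also have "\<dots> = ennreal ?c * (\<integral>\<^sup>+ u. \<Phi> u * indicator {0<..} u \<partial>lborel)"
    by (rule nn_integral_cmult) auto
  finally show ?thesis .
qed

lemma parallelogram_aux:
  fixes p q :: "'a::euclidean_space"
  shows "(norm ((- ((1/2) *\<^sub>R p) + q) + p))^2 + (norm (- ((1/2) *\<^sub>R p) + q))^2 = 2 * (norm q)^2 + (norm p)^2 / 2"
    and "((- ((1/2) *\<^sub>R p) + q) + p) - (- ((1/2) *\<^sub>R p) + q) = p"
proof -
  have h: "(1/2) *\<^sub>R p + (1/2) *\<^sub>R p = p" using scaleR_add_left[of "1/2" "1/2" p] by simp
  have e: "(- ((1/2) *\<^sub>R p) + q) + p = q + (1/2) *\<^sub>R p"
    by (metis h add.commute add.left_commute add_minus_cancel)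
  show "(norm ((- ((1/2) *\<^sub>R p) + q) + p))^2 + (norm (- ((1/2) *\<^sub>R p) + q))^2 = 2 * (norm q)^2 + (norm p)^2 / 2"
    unfolding e by (simp add: power2_norm_eq_inner inner_simps algebra_simps)
  show "((- ((1/2) *\<^sub>R p) + q) + p) - (- ((1/2) *\<^sub>R p) + q) = p" by simp
qed

lemma aux_not_lt1: "1 \<le> u \<Longrightarrow> \<not> (2*u + (norm (x::'a::real_normed_vector))^2/2 < 1)"
  using zero_le_power2[of "norm x"] by linarith

lemma cone_kernel:
  fixes H :: "'a::euclidean_space \<Rightarrow> ennreal"
  assumes [measurable]: "H \<in> borel_measurable borel" and D: "DIM('a) \<ge> 2"
  shows "(\<integral>\<^sup>+ z1. \<integral>\<^sup>+ z2. (if (norm z1)^2 + (norm z2)^2 < 1 then H ((z1 - z2) /\<^sub>R sqrt ((norm z1)^2 + (norm z2)^2)) else 0) \<partial>lborel \<partial>lborel)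
    \<le> ennreal (unit_ball_vol (DIM('a)) * DIM('a) / 2 / 2) * (\<integral>\<^sup>+ w. (if norm w < 2 then H w else 0) \<partial>lborel)"
proof -
  let ?c = "unit_ball_vol (DIM('a)) * DIM('a) / 2"
  define G where "G z1 z2 = (if (norm z1)^2 + (norm z2)^2 < 1 then H ((z1 - z2) /\<^sub>R sqrt ((norm z1)^2 + (norm z2)^2)) else 0)" for z1 z2 :: 'a
  define \<Phi> where "\<Phi> p u = (if 2 * u + (norm p)^2 / 2 < 1 then H (p /\<^sub>R sqrt (2 * u + (norm p)^2 / 2)) else 0)" for p :: 'a and u :: real
  define \<Psi> where "\<Psi> p \<tau> = (if (norm p)^2 < 2 * \<tau> \<and> \<tau> < 1 then H (p /\<^sub>R sqrt \<tau>) else 0)" for p :: 'a and \<tau> :: real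
  define J where "J = (\<integral>\<^sup>+ w. (if norm w < 2 then H w else 0) \<partial>lborel)"
  have [measurable]: "case_prod G \<in> borel_measurable (lborel \<Otimes>\<^sub>M lborel)"
    unfolding G_def by measurable
  have [measurable]: "case_prod \<Phi> \<in> borel_measurable (lborel \<Otimes>\<^sub>M lborel)"
    unfolding \<Phi>_def by measurable
  have [measurable]: "case_prod \<Psi> \<in> borel_measurable (lborel \<Otimes>\<^sub>M lborel)"
    unfolding \<Psi>_def by measurable
  have "(\<integral>\<^sup>+ z1. \<integral>\<^sup>+ z2. G z1 z2 \<partial>lborel \<partial>lborel) = (\<integral>\<^sup>+ z2. \<integral>\<^sup>+ z1. G z1 z2 \<partial>lborel \<partial>lborel)"
    by (rule lborel_pair.Fubini'[symmetric]) measurable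
  also have "\<dots> = (\<integral>\<^sup>+ z2. \<integral>\<^sup>+ p. G (z2 + p) z2 \<partial>lborel \<partial>lborel)"
    by (intro nn_integral_cong nn_integral_translate) (simp add: G_def)
  also have "\<dots> = (\<integral>\<^sup>+ p. \<integral>\<^sup>+ z2. G (z2 + p) z2 \<partial>lborel \<partial>lborel)"
    by (rule lborel_pair.Fubini') (simp add: G_def)
  also have "\<dots> = (\<integral>\<^sup>+ p. \<integral>\<^sup>+ q. G ((- ((1/2) *\<^sub>R p) + q) + p) (- ((1/2) *\<^sub>R p) + q) \<partial>lborel \<partial>lborel)"
    by (intro nn_integral_cong nn_integral_translate) (simp add: G_def)
  also have "\<dots> = (\<integral>\<^sup>+ p. \<integral>\<^sup>+ (q::'a). \<Phi> p ((norm q)^2) \<partial>lborel \<partial>lborel)"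
    by (intro nn_integral_cong) (simp only: G_def \<Phi>_def parallelogram_aux)
  also have "\<dots> \<le> (\<integral>\<^sup>+ p. ennreal ?c * (\<integral>\<^sup>+ u. \<Phi> p u * indicator {0<..} u \<partial>lborel) \<partial>lborel)"
    by (intro nn_integral_mono nn_integral_norm_sq_le D) (auto simp: \<Phi>_def aux_not_lt1)
  also have "\<dots> = (\<integral>\<^sup>+ p. ennreal ?c * (ennreal (1/2) * (\<integral>\<^sup>+ \<tau>. \<Psi> p \<tau> \<partial>lborel)) \<partial>lborel)"
  proof (intro nn_integral_cong arg_cong2[where f="(*)"] refl)
    fix p :: 'a
    have "(\<integral>\<^sup>+ u. \<Phi> p u * indicator {0<..} u \<partial>lborel) = ennreal \<bar>1/2\<bar> * (\<integral>\<^sup>+ \<tau>. \<Phi> p (- ((norm p)^2/4) + 1/2 * \<tau>) * indicator {0<..} (- ((norm p)^2/4) + 1/2 * \<tau>) \<partial>lborel)"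
      by (rule nn_integral_real_affine) (auto simp: \<Phi>_def)
    also have "(\<lambda>\<tau>. \<Phi> p (- ((norm p)^2/4) + 1/2 * \<tau>) * indicator {0<..} (- ((norm p)^2/4) + 1/2 * \<tau>)) = \<Psi> p"
    proof
      fix \<tau> :: real
      have e1: "2 * (- ((norm p)^2/4) + 1/2 * \<tau>) + (norm p)^2 / 2 = \<tau>" by simp
      have e2: "(- ((norm p)^2/4) + 1/2 * \<tau> \<in> {0<..}) \<longleftrightarrow> (norm p)^2 < 2 * \<tau>" by auto
      show "\<Phi> p (- ((norm p)^2/4) + 1/2 * \<tau>) * indicator {0<..} (- ((norm p)^2/4) + 1/2 * \<tau>) = \<Psi> p \<tau>"
        unfolding \<Phi>_def e1 \<Psi>_def indicator_def e2 by auto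
    qed
    finally show "(\<integral>\<^sup>+ u. \<Phi> p u * indicator {0<..} u \<partial>lborel) = ennreal (1/2) * (\<integral>\<^sup>+ \<tau>. \<Psi> p \<tau> \<partial>lborel)" by simp
  qed
  also have "\<dots> = (\<integral>\<^sup>+ p. ennreal (?c / 2) * (\<integral>\<^sup>+ \<tau>. \<Psi> p \<tau> \<partial>lborel) \<partial>lborel)"
  proof (intro nn_integral_cong)
    fix p :: 'a
    have "ennreal ?c * ennreal (1/2) = ennreal (?c / 2)"
      by (subst ennreal_mult[symmetric]) auto
    thus "ennreal ?c * (ennreal (1/2) * (\<integral>\<^sup>+ \<tau>. \<Psi> p \<tau> \<partial>lborel)) = ennreal (?c / 2) * (\<integral>\<^sup>+ \<tau>. \<Psi> p \<tau> \<partial>lborel)"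
      by (simp add: mult.assoc[symmetric])
  qed
  also have "\<dots> = ennreal (?c / 2) * (\<integral>\<^sup>+ p. \<integral>\<^sup>+ \<tau>. \<Psi> p \<tau> \<partial>lborel \<partial>lborel)"
    by (rule nn_integral_cmult) measurable
  also have "(\<integral>\<^sup>+ p. \<integral>\<^sup>+ \<tau>. \<Psi> p \<tau> \<partial>lborel \<partial>lborel) = (\<integral>\<^sup>+ \<tau>. \<integral>\<^sup>+ p. \<Psi> p \<tau> \<partial>lborel \<partial>lborel)"
    by (rule lborel_pair.Fubini'[symmetric]) measurable
  also have "\<dots> \<le> (\<integral>\<^sup>+ (\<tau>::real). J * indicator {0<..<1} \<tau> \<partial>lborel)"
  proof (rule nn_integral_mono)
    fix \<tau> :: real
    show "(\<integral>\<^sup>+ p. \<Psi> p \<tau> \<partial>lborel) \<le> J * indicator {0<..<1} \<tau>"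
    proof (cases "0 < \<tau> \<and> \<tau> < 1")
      case True
      hence s: "sqrt \<tau> \<noteq> 0" by simp
      have "(\<integral>\<^sup>+ p. \<Psi> p \<tau> \<partial>lborel) = ennreal (\<bar>sqrt \<tau>\<bar> ^ DIM('a)) * (\<integral>\<^sup>+ w. \<Psi> (sqrt \<tau> *\<^sub>R w) \<tau> \<partial>lborel)"
        by (rule nn_integral_scale[OF _ s]) (simp add: \<Psi>_def)
      also have "\<dots> \<le> 1 * J"
      proof (rule mult_mono)
        show "ennreal (\<bar>sqrt \<tau>\<bar> ^ DIM('a)) \<le> 1"
          using True by (auto intro!: power_le_one)
        show "(\<integral>\<^sup>+ w. \<Psi> (sqrt \<tau> *\<^sub>R w) \<tau> \<partial>lborel) \<le> J"
          unfolding J_def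
        proof (rule nn_integral_mono)
          fix w :: 'a
          have "\<Psi> (sqrt \<tau> *\<^sub>R w) \<tau> = (if \<tau> * (norm w)^2 < 2 * \<tau> then H w else 0)"
            using True by (simp add: \<Psi>_def power_mult_distrib)
          also have "\<dots> \<le> (if norm w < 2 then H w else 0)"
          proof -
            have "\<tau> * (norm w)^2 < 2 * \<tau> \<Longrightarrow> norm w < 2"
            proof -
              assume "\<tau> * (norm w)^2 < 2 * \<tau>"
              hence "(norm w)^2 < 2" using True by simp
              hence "(norm w)^2 < 2^2" by simp
              thus "norm w < 2" by (rule power_less_imp_less_base) simp
            qed
            thus ?thesis by auto
          qed
          finally show "\<Psi> (sqrt \<tau> *\<^sub>R w) \<tau> \<le> (if norm w < 2 then H w else 0)" .
        qed
      qed auto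
      finally show ?thesis using True by (simp add: indicator_def)
    next
      case False
      have "\<Psi> p \<tau> = 0" for p
      proof -
        have "\<not>((norm p)^2 < 2 * \<tau> \<and> \<tau> < 1)" using False zero_le_power2[of "norm p"] by linarith
        thus ?thesis unfolding \<Psi>_def by (simp only: if_False)
      qed
      thus ?thesis by simp
    qed
  qed
  also have "\<dots> = J"
    by (subst nn_integral_cmult) auto
  finally have "(\<integral>\<^sup>+ z1. \<integral>\<^sup>+ z2. G z1 z2 \<partial>lborel \<partial>lborel) \<le> ennreal (?c / 2) * J"
    by (simp add: mult_left_mono)
  thus ?thesis unfolding G_def J_def .
qed

lemma ball_sets_borel[measurable]: "ball (c::'b::euclidean_space) r \<in> sets borel"
  by simp

lemma sets_sphere_surface_measure[measurable_cong]:
  "sets (sphere_surface_measure :: 'b::euclidean_space measure) = sets borel"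
  by (simp add: sphere_surface_measure_def)

lemma space_sphere_surface_measure:
  "space (sphere_surface_measure :: 'b::euclidean_space measure) = UNIV"
  by (simp add: sphere_surface_measure_def)

lemma nn_integral_sphere:
  fixes \<phi> :: "'b::euclidean_space \<Rightarrow> ennreal"
  assumes [measurable]: "\<phi> \<in> borel_measurable borel"
  shows "(\<integral>\<^sup>+ u. \<phi> u \<partial>sphere_surface_measure) =
    (\<integral>\<^sup>+ z. ennreal (real DIM('b)) * indicator (ball 0 1) z * \<phi> (z /\<^sub>R norm z) \<partial>lborel)"
proof -
  have "(\<integral>\<^sup>+ u. \<phi> u \<partial>sphere_surface_measure) = (\<integral>\<^sup>+ z. \<phi> (z /\<^sub>R norm z) \<partial>density lborel (\<lambda>y. ennreal (real DIM('b)) * indicator (ball 0 1) y))"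
    unfolding sphere_surface_measure_def by (rule nn_integral_distr) auto
  also have "\<dots> = (\<integral>\<^sup>+ z. ennreal (real DIM('b)) * indicator (ball 0 1) z * \<phi> (z /\<^sub>R norm z) \<partial>lborel)"
    by (rule nn_integral_density) auto
  finally show ?thesis .
qed

lemma finite_sphere_surface_measure:
  "finite_measure (sphere_surface_measure :: 'b::euclidean_space measure)"
proof (rule finite_measureI)
  have "emeasure (sphere_surface_measure :: 'b measure) (space sphere_surface_measure)
     = (\<integral>\<^sup>+ u. 1 \<partial>(sphere_surface_measure :: 'b measure))"
    by simp
  also have "\<dots> = (\<integral>\<^sup>+ (z::'b). ennreal (real DIM('b)) * indicator (ball 0 1) z \<partial>lborel)"
    by (subst nn_integral_sphere) auto
  also have "\<dots> = ennreal (real DIM('b)) * emeasure lborel (ball (0::'b) 1)"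
    by (subst nn_integral_cmult) auto
  also have "\<dots> < \<infinity>"
    using emeasure_lborel_ball_finite[of "0::'b" 1] by (simp add: ennreal_mult_less_top)
  finally show "emeasure (sphere_surface_measure :: 'b measure) (space sphere_surface_measure) \<noteq> \<infinity>"
    by simp
qed

lemma AE_sphere_norm:
  "AE u in (sphere_surface_measure :: 'b::euclidean_space measure). norm u \<le> 1"
proof -
  have "norm (y /\<^sub>R norm y) \<le> 1" for y :: 'b
    by (cases "y = 0") auto
  thus ?thesis
    unfolding sphere_surface_measure_def
    by (subst AE_distr_iff) auto
qed

lemma borel_measurable_fst_minus_snd:
  "(\<lambda>u::'a::euclidean_space\<times>'a. fst u - snd u) \<in> borel_measurable borel"
  by (intro borel_measurable_continuous_onI continuous_intros)

lemma borel_measurable_dir_diff: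
  "(\<lambda>x::'a::euclidean_space\<times>'a. (fst x - snd x) /\<^sub>R norm x) \<in> borel_measurable borel"
  by (intro borel_measurable_scaleR borel_measurable_inverse borel_measurable_norm borel_measurable_fst_minus_snd)

lemma sphere_kernel:
  fixes H :: "'a::euclidean_space \<Rightarrow> ennreal"
  assumes [measurable]: "H \<in> borel_measurable borel" and D: "DIM('a) \<ge> 2"
  shows "(\<integral>\<^sup>+ u. H (fst u - snd u) \<partial>(sphere_surface_measure :: ('a \<times> 'a) measure))
    \<le> ennreal (2 * DIM('a) * (unit_ball_vol (DIM('a)) * DIM('a) / 2 / 2)) * (\<integral>\<^sup>+ w. (if norm w < 2 then H w else 0) \<partial>lborel)"
proof -
  let ?K = "unit_ball_vol (DIM('a)) * DIM('a) / 2 / 2"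
  have mb: "(\<lambda>x::'a\<times>'a. indicator (ball 0 1) x * H ((fst x - snd x) /\<^sub>R norm x)) \<in> borel_measurable borel"
    by (intro borel_measurable_times_ennreal borel_measurable_indicator measurable_compose[OF borel_measurable_dir_diff]) auto
  have "(\<integral>\<^sup>+ u. H (fst u - snd u) \<partial>(sphere_surface_measure :: ('a \<times> 'a) measure))
    = (\<integral>\<^sup>+ (z::'a\<times>'a). ennreal (real DIM('a \<times> 'a)) * (indicator (ball 0 1) z * H ((fst z - snd z) /\<^sub>R norm z)) \<partial>lborel)"
    apply (subst nn_integral_sphere[OF measurable_compose[OF borel_measurable_fst_minus_snd]])
     apply simp
    apply (intro nn_integral_cong)
    apply (simp add: mult.assoc scaleR_diff_right)
    done
  also have "\<dots> = ennreal (real DIM('a \<times> 'a)) * (\<integral>\<^sup>+ (z::'a\<times>'a). indicator (ball 0 1) z * H ((fst z - snd z) /\<^sub>R norm z) \<partial>lborel)"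
    by (rule nn_integral_cmult) (simp only: measurable_lborel2 mb)
  also have "(\<integral>\<^sup>+ (z::'a\<times>'a). indicator (ball 0 1) z * H ((fst z - snd z) /\<^sub>R norm z) \<partial>lborel)
     = (\<integral>\<^sup>+ z. indicator (ball 0 1) z * H ((fst z - snd z) /\<^sub>R norm z) \<partial>(lborel \<Otimes>\<^sub>M lborel))"
    by (simp only: lborel_prod)
  also have "\<dots> = (\<integral>\<^sup>+ z1. \<integral>\<^sup>+ z2. indicator (ball 0 1) (z1, z2) * H ((fst (z1, z2) - snd (z1, z2)) /\<^sub>R norm (z1, z2)) \<partial>lborel \<partial>lborel)"
    by (rule lborel.nn_integral_fst[symmetric]) (simp only: lborel_prod measurable_lborel2 mb)
  also have "\<dots> = (\<integral>\<^sup>+ z1. \<integral>\<^sup>+ z2. (if (norm z1)^2 + (norm z2)^2 < 1 then H ((z1 - z2) /\<^sub>R sqrt ((norm z1)^2 + (norm z2)^2)) else 0) \<partial>lborel \<partial>lborel)"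
  proof (intro nn_integral_cong)
    fix z1 z2 :: 'a
    have "norm (z1, z2) < 1 \<longleftrightarrow> (norm z1)^2 + (norm z2)^2 < 1"
      by (simp add: norm_Pair)
    thus "indicator (ball 0 1) (z1, z2) * H ((fst (z1, z2) - snd (z1, z2)) /\<^sub>R norm (z1, z2)) =
      (if (norm z1)^2 + (norm z2)^2 < 1 then H ((z1 - z2) /\<^sub>R sqrt ((norm z1)^2 + (norm z2)^2)) else 0)"
      by (simp add: indicator_def mem_ball_0 norm_Pair)
  qed
  also have "\<dots> \<le> ennreal ?K * (\<integral>\<^sup>+ w. (if norm w < 2 then H w else 0) \<partial>lborel)"
    by (rule cone_kernel) (auto simp: D)
  finally have "(\<integral>\<^sup>+ u. H (fst u - snd u) \<partial>(sphere_surface_measure :: ('a \<times> 'a) measure))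
     \<le> ennreal (real DIM('a \<times> 'a)) * (ennreal ?K * (\<integral>\<^sup>+ w. (if norm w < 2 then H w else 0) \<partial>lborel))"
    by (simp add: mult_left_mono)
  also have "\<dots> = ennreal (2 * DIM('a) * ?K) * (\<integral>\<^sup>+ w. (if norm w < 2 then H w else 0) \<partial>lborel)"
  proof -
    have e: "ennreal (real DIM('a \<times> 'a)) * ennreal ?K = ennreal (2 * DIM('a) * ?K)"
      by (subst ennreal_mult[symmetric]) auto
    show ?thesis by (simp only: mult.assoc[symmetric] e)
  qed
  finally show ?thesis .
qed

lemma fst_borel_measurable[measurable]: "fst \<in> borel_measurable (borel :: ('a::euclidean_space \<times> 'b::euclidean_space) measure)"
  by (intro borel_measurable_continuous_onI continuous_on_fst continuous_on_id)

lemma snd_borel_measurable[measurable]: "snd \<in> borel_measurable (borel :: ('a::euclidean_space \<times> 'b::euclidean_space) measure)"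
  by (intro borel_measurable_continuous_onI continuous_on_snd continuous_on_id)

definition Bp :: "('a::euclidean_space \<Rightarrow> real) \<Rightarrow> ('a \<Rightarrow> real) \<Rightarrow> 'a \<Rightarrow> ennreal" where
  "Bp f g x = (\<integral>\<^sup>+ u. ennreal (\<bar>f (x - fst u)\<bar> * \<bar>g (x - snd u)\<bar>) \<partial>(sphere_surface_measure :: ('a \<times> 'a) measure))"

definition Floc :: "('a::euclidean_space \<Rightarrow> real) \<Rightarrow> real \<Rightarrow> 'a \<Rightarrow> ennreal" where
  "Floc f r x = (\<integral>\<^sup>+ y. (if dist x y < r then ennreal \<bar>f y\<bar> else 0) \<partial>lborel)"

lemma Floc_measurable[measurable]:
  assumes [measurable]: "f \<in> borel_measurable borel"
  shows "Floc f r \<in> borel_measurable borel"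
proof -
  have "(\<lambda>x. Floc f r x) \<in> borel_measurable lborel"
    unfolding Floc_def by measurable
  thus ?thesis by simp
qed

lemma Bp_measurable[measurable]:
  assumes [measurable]: "f \<in> borel_measurable borel" "g \<in> borel_measurable borel"
  shows "Bp f g \<in> borel_measurable borel"
proof -
  interpret S: finite_measure "sphere_surface_measure :: ('a \<times> 'a) measure"
    by (rule finite_sphere_surface_measure)
  have "(\<lambda>x. Bp f g x) \<in> borel_measurable lborel"
    unfolding Bp_def by measurable
  thus ?thesis by simp
qed

lemma Floc_le: "Floc f r x \<le> (\<integral>\<^sup>+ y. ennreal \<bar>f y\<bar> \<partial>lborel)"
  unfolding Floc_def by (intro nn_integral_mono) auto

lemma inverse_mult_le_one: "inverse x * x \<le> (1::ennreal)"
proof (cases x)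
  case (real r)
  thus ?thesis
    by (cases "r = 0") (auto simp: ennreal_inverse_mult inverse_ennreal ennreal_mult[symmetric])
qed simp

lemma Floc_reflect:
  fixes f :: "'a::euclidean_space \<Rightarrow> real"
  assumes [measurable]: "f \<in> borel_measurable borel"
  shows "(\<integral>\<^sup>+ w. (if norm w < r then ennreal \<bar>f (b - w)\<bar> else 0) \<partial>lborel) = Floc f r b"
proof -
  have "Floc f r b = (\<integral>\<^sup>+ t. (if dist b (b + t) < r then ennreal \<bar>f (b + t)\<bar> else 0) \<partial>lborel)"
    unfolding Floc_def by (rule nn_integral_translate) measurable
  also have "\<dots> = ennreal (\<bar>-1\<bar> ^ DIM('a)) * (\<integral>\<^sup>+ w. (if dist b (b + (-1) *\<^sub>R w) < r then ennreal \<bar>f (b + (-1) *\<^sub>R w)\<bar> else 0) \<partial>lborel)"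
    by (rule nn_integral_scale) auto
  also have "\<dots> = (\<integral>\<^sup>+ w. (if norm w < r then ennreal \<bar>f (b - w)\<bar> else 0) \<partial>lborel)"
  proof -
    have e: "b + (-1) *\<^sub>R w = b - w" for w :: 'a by (simp add: algebra_simps)
    show ?thesis unfolding e by (simp add: dist_norm)
  qed
  finally show ?thesis by simp
qed

lemma ennreal_inverse_antimono:
  assumes "(a::ennreal) \<le> b" shows "inverse b \<le> inverse a"
proof (cases "a = 0")
  case True thus ?thesis by simp
next
  case a0: False
  show ?thesis
  proof (cases "b = top")
    case True thus ?thesis by simp
  next
    case bt: False
    obtain y where y: "b = ennreal y" "y \<ge> 0" using bt by (cases b) auto
    obtain x where x: "a = ennreal x" "x \<ge> 0" using assms bt y by (cases a) (auto simp: top_unique)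
    have "x > 0" using a0 x by (auto simp: less_le)
    moreover have "x \<le> y" using assms x y by (simp add: ennreal_le_iff)
    ultimately show ?thesis using x y by (simp add: inverse_ennreal ennreal_leI le_imp_inverse_le)
  qed
qed

lemma Floc_mono_ball:
  assumes "norm v \<le> 1"
  shows "Floc f 2 b \<le> Floc f 3 (v + b)"
  unfolding Floc_def
proof (intro nn_integral_mono)
  fix y
  have "dist b y < 2 \<Longrightarrow> dist (v + b) y < 3"
    using assms dist_triangle[of "v + b" y b] by (simp add: dist_norm)
  thus "(if dist b y < 2 then ennreal \<bar>f y\<bar> else 0) \<le> (if dist (v + b) y < 3 then ennreal \<bar>f y\<bar> else 0)"
    by auto
qed

lemma key_bound:
  fixes f g :: "'a::euclidean_space \<Rightarrow> real"
  assumes [measurable]: "f \<in> borel_measurable borel" "g \<in> borel_measurable borel"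
    and D: "DIM('a) \<ge> 2"
  shows "(\<integral>\<^sup>+ x. Bp f g x * inverse (Floc f 3 x) \<partial>lborel)
    \<le> ennreal (2 * DIM('a) * (unit_ball_vol (DIM('a)) * DIM('a) / 2 / 2)) * (\<integral>\<^sup>+ y. ennreal \<bar>g y\<bar> \<partial>lborel)"
proof -
  let ?S = "sphere_surface_measure :: ('a \<times> 'a) measure"
  let ?K = "2 * DIM('a) * (unit_ball_vol (DIM('a)) * DIM('a) / 2 / 2)"
  interpret S: finite_measure ?S
    by (rule finite_sphere_surface_measure)
  interpret P: pair_sigma_finite lborel ?S ..
  define h where "h x u = ennreal (\<bar>f (x - fst u)\<bar> * \<bar>g (x - snd u)\<bar>) * inverse (Floc f 3 x)" for x u
  define k where "k b u = ennreal \<bar>f (snd u + b - fst u)\<bar> * (ennreal \<bar>g b\<bar> * inverse (Floc f 2 b))" for b u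
  have [measurable]: "case_prod h \<in> borel_measurable (lborel \<Otimes>\<^sub>M ?S)"
    unfolding h_def by measurable
  have [measurable]: "case_prod k \<in> borel_measurable (lborel \<Otimes>\<^sub>M ?S)"
    unfolding k_def by measurable
  have "(\<integral>\<^sup>+ x. Bp f g x * inverse (Floc f 3 x) \<partial>lborel) = (\<integral>\<^sup>+ x. \<integral>\<^sup>+ u. h x u \<partial>?S \<partial>lborel)"
    unfolding Bp_def h_def
    by (intro nn_integral_cong nn_integral_multc[symmetric]) measurable
  also have "\<dots> = (\<integral>\<^sup>+ u. \<integral>\<^sup>+ x. h x u \<partial>lborel \<partial>?S)"
    by (rule P.Fubini'[symmetric]) measurable
  also have "\<dots> \<le> (\<integral>\<^sup>+ u. \<integral>\<^sup>+ b. k b u \<partial>lborel \<partial>?S)"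
  proof (rule nn_integral_mono_AE)
    show "AE u in ?S. (\<integral>\<^sup>+ x. h x u \<partial>lborel) \<le> (\<integral>\<^sup>+ b. k b u \<partial>lborel)"
      using AE_sphere_norm
    proof eventually_elim
      fix u :: "'a \<times> 'a" assume u: "norm u \<le> 1"
      have u2: "norm (snd u) \<le> 1"
        using norm_snd_le[of "snd u" "fst u"] u by simp
      have "(\<integral>\<^sup>+ x. h x u \<partial>lborel) = (\<integral>\<^sup>+ b. h (snd u + b) u \<partial>lborel)"
        by (rule nn_integral_translate) (unfold h_def, measurable)
      also have "\<dots> \<le> (\<integral>\<^sup>+ b. k b u \<partial>lborel)"
      proof (rule nn_integral_mono)
        fix b
        have "inverse (Floc f 3 (snd u + b)) \<le> inverse (Floc f 2 b)"
          using Floc_mono_ball[OF u2, of f b] by (rule ennreal_inverse_antimono)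
        hence "ennreal \<bar>f (snd u + b - fst u)\<bar> * (ennreal \<bar>g b\<bar> * inverse (Floc f 3 (snd u + b)))
            \<le> ennreal \<bar>f (snd u + b - fst u)\<bar> * (ennreal \<bar>g b\<bar> * inverse (Floc f 2 b))"
          by (intro mult_left_mono) auto
        moreover have "h (snd u + b) u = ennreal \<bar>f (snd u + b - fst u)\<bar> * (ennreal \<bar>g b\<bar> * inverse (Floc f 3 (snd u + b)))"
          unfolding h_def by (simp add: ennreal_mult mult.assoc)
        ultimately show "h (snd u + b) u \<le> k b u"
          unfolding k_def by simp
      qed
      finally show "(\<integral>\<^sup>+ x. h x u \<partial>lborel) \<le> (\<integral>\<^sup>+ b. k b u \<partial>lborel)" .
    qed
  qed
  also have "\<dots> = (\<integral>\<^sup>+ b. \<integral>\<^sup>+ u. k b u \<partial>?S \<partial>lborel)"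
    by (rule P.Fubini') measurable
  also have "\<dots> = (\<integral>\<^sup>+ b. (\<integral>\<^sup>+ u. ennreal \<bar>f (b - (fst u - snd u))\<bar> \<partial>?S) * (ennreal \<bar>g b\<bar> * inverse (Floc f 2 b)) \<partial>lborel)"
  proof (intro nn_integral_cong)
    fix b :: 'a
    have e: "snd u + b - fst u = b - (fst u - snd u)" for u :: "'a \<times> 'a" by (simp add: algebra_simps)
    have "(\<integral>\<^sup>+ u. ennreal \<bar>f (b - (fst u - snd u))\<bar> * (ennreal \<bar>g b\<bar> * inverse (Floc f 2 b)) \<partial>?S)
       = (\<integral>\<^sup>+ u. ennreal \<bar>f (b - (fst u - snd u))\<bar> \<partial>?S) * (ennreal \<bar>g b\<bar> * inverse (Floc f 2 b))"
      by (rule nn_integral_multc) measurable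
    thus "(\<integral>\<^sup>+ u. k b u \<partial>?S) = (\<integral>\<^sup>+ u. ennreal \<bar>f (b - (fst u - snd u))\<bar> \<partial>?S) * (ennreal \<bar>g b\<bar> * inverse (Floc f 2 b))"
      by (simp only: k_def e)
  qed
  also have "\<dots> \<le> (\<integral>\<^sup>+ b. (ennreal ?K * Floc f 2 b) * (ennreal \<bar>g b\<bar> * inverse (Floc f 2 b)) \<partial>lborel)"
  proof (intro nn_integral_mono mult_right_mono)
    fix b :: 'a
    have "(\<integral>\<^sup>+ u. ennreal \<bar>f (b - (fst u - snd u))\<bar> \<partial>?S) \<le> ennreal ?K * (\<integral>\<^sup>+ w. (if norm w < 2 then ennreal \<bar>f (b - w)\<bar> else 0) \<partial>lborel)"
      by (rule sphere_kernel[OF _ D]) measurable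
    also have "\<dots> = ennreal ?K * Floc f 2 b"
      by (simp add: Floc_reflect)
    finally show "(\<integral>\<^sup>+ u. ennreal \<bar>f (b - (fst u - snd u))\<bar> \<partial>?S) \<le> ennreal ?K * Floc f 2 b" .
  qed auto
  also have "\<dots> \<le> (\<integral>\<^sup>+ b. ennreal ?K * ennreal \<bar>g b\<bar> \<partial>lborel)"
  proof (rule nn_integral_mono)
    fix b :: 'a
    have "(ennreal ?K * Floc f 2 b) * (ennreal \<bar>g b\<bar> * inverse (Floc f 2 b))
        = (ennreal ?K * ennreal \<bar>g b\<bar>) * (inverse (Floc f 2 b) * Floc f 2 b)"
      by (simp only: ac_simps)
    also have "\<dots> \<le> (ennreal ?K * ennreal \<bar>g b\<bar>) * 1"
      by (intro mult_left_mono inverse_mult_le_one) auto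
    finally show "(ennreal ?K * Floc f 2 b) * (ennreal \<bar>g b\<bar> * inverse (Floc f 2 b)) \<le> ennreal ?K * ennreal \<bar>g b\<bar>"
      by simp
  qed
  also have "\<dots> = ennreal ?K * (\<integral>\<^sup>+ y. ennreal \<bar>g y\<bar> \<partial>lborel)"
    by (rule nn_integral_cmult) measurable
  finally show ?thesis .
qed

lemma powr_prod_le_sum:
  fixes \<alpha> \<beta> s :: real
  assumes "0 \<le> \<alpha>" "0 \<le> \<beta>" "\<beta> \<le> 1" "1/2 \<le> s" "s \<le> 1"
  shows "(\<alpha> * \<beta>) powr s \<le> \<alpha> + \<beta>"
proof (cases "1 \<le> \<alpha> * \<beta>")
  case True
  have "(\<alpha> * \<beta>) powr s \<le> (\<alpha> * \<beta>) powr 1"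
    using True assms by (intro powr_mono) auto
  also have "\<dots> = \<alpha> * \<beta>" using True by simp
  also have "\<dots> \<le> \<alpha>" using assms by (intro mult_left_le) auto
  finally show ?thesis using assms by simp
next
  case False
  show ?thesis
  proof (cases "\<alpha> * \<beta> = 0")
    case True show ?thesis unfolding True using assms by simp
  next
    case nz: False
    have pos: "0 < \<alpha> * \<beta>" using nz assms by (simp add: less_le)
    have "(\<alpha> * \<beta>) powr s \<le> (\<alpha> * \<beta>) powr (1/2)"
      using False assms pos by (intro powr_mono') auto
    also have "\<dots> = sqrt (\<alpha> * \<beta>)" using pos by (simp add: powr_half_sqrt)
    also have "\<dots> \<le> (\<alpha> + \<beta>) / 2" using assms by (intro arith_geo_mean_sqrt) auto
    finally show ?thesis using assms by simp
  qed
qed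

lemma pointwise_bound:
  fixes s a m b :: real and Bx Fx :: ennreal
  assumes s: "1/2 \<le> s" "s \<le> 1" and b: "0 \<le> b" "ennreal b \<le> Bx"
    and F: "Fx \<le> ennreal a" and a: "a > 0" and m: "m > 0"
  shows "ennreal (b powr s) \<le> ennreal (m powr s) * (ennreal (a/m) * (Bx * inverse Fx) + Fx * ennreal (1/a))"
proof (cases "b = 0")
  case True thus ?thesis by simp
next
  case bnz: False
  hence bpos: "b > 0" using b by simp
  hence Bpos: "Bx \<noteq> 0" using b(2) by (auto simp: ennreal_le_iff2 ennreal_eq_0_iff)
  show ?thesis
  proof (cases "Fx = 0")
    case True
    have "Bx * inverse Fx = top" using True Bpos by (simp add: ennreal_mult_eq_top_iff)
    moreover have "ennreal (a/m) \<noteq> 0" using a m by simp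
    moreover have "ennreal (m powr s) \<noteq> 0" using m by simp
    ultimately have "ennreal (m powr s) * (ennreal (a/m) * (Bx * inverse Fx) + Fx * ennreal (1/a)) = top"
      by (simp add: ennreal_mult_eq_top_iff)
    thus ?thesis by simp
  next
    case Fnz: False
    obtain \<phi> where \<phi>: "Fx = ennreal \<phi>" "0 \<le> \<phi>" using F by (cases Fx) (auto simp: top_unique)
    have \<phi>pos: "\<phi> > 0" using \<phi> Fnz by (auto simp: less_le)
    have \<phi>a: "\<phi> \<le> a" using F \<phi> a by (simp add: ennreal_le_iff)
    have "b powr s = m powr s * ((a/m * (b/\<phi>)) * (\<phi>/a)) powr s"
    proof -
      have e1: "(a/m * (b/\<phi>)) * (\<phi>/a) = b / m" using a m \<phi>pos by (simp add: field_simps)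
      have e2: "(m * (b/m)) powr s = m powr s * (b/m) powr s" using m b by (intro powr_mult)
      have e3: "m * (b/m) = b" using m by simp
      show ?thesis by (simp only: e1 e2[symmetric] e3)
    qed
    also have "\<dots> \<le> m powr s * (a/m * (b/\<phi>) + \<phi>/a)"
      using a m \<phi>pos \<phi>a b s by (intro mult_left_mono powr_prod_le_sum) auto
    finally have real_ineq: "b powr s \<le> m powr s * (a/m * (b/\<phi>) + \<phi>/a)" .
    have "ennreal (b powr s) \<le> ennreal (m powr s * (a/m * (b/\<phi>) + \<phi>/a))"
      by (rule ennreal_leI[OF real_ineq])
    also have "\<dots> = ennreal (m powr s) * (ennreal (a/m) * (ennreal b * inverse Fx) + Fx * ennreal (1/a))"
      using a m \<phi>pos b \<phi>
      by (simp add: inverse_ennreal ennreal_mult[symmetric] ennreal_plus[symmetric] divide_inverse del: ennreal_plus)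
    also have "\<dots> \<le> ennreal (m powr s) * (ennreal (a/m) * (Bx * inverse Fx) + Fx * ennreal (1/a))"
      using b by (intro mult_left_mono add_right_mono mult_right_mono) auto
    finally show ?thesis .
  qed
qed

lemma Floc_integral:
  fixes f :: "'a::euclidean_space \<Rightarrow> real"
  assumes [measurable]: "f \<in> borel_measurable borel"
  shows "(\<integral>\<^sup>+ x. Floc f r x \<partial>lborel) \<le> ennreal (unit_ball_vol (DIM('a)) * r ^ DIM('a)) * (\<integral>\<^sup>+ y. ennreal \<bar>f y\<bar> \<partial>lborel)"
proof (cases "r \<ge> 0")
  case r: True
  have "(\<integral>\<^sup>+ x. Floc f r x \<partial>lborel) = (\<integral>\<^sup>+ y. \<integral>\<^sup>+ x. (if dist x y < r then ennreal \<bar>f y\<bar> else 0) \<partial>lborel \<partial>lborel)"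
    unfolding Floc_def by (rule lborel_pair.Fubini') measurable
  also have "\<dots> = (\<integral>\<^sup>+ y. ennreal \<bar>f y\<bar> * emeasure lborel (ball y r) \<partial>lborel)"
  proof (intro nn_integral_cong)
    fix y :: 'a
    have "(\<integral>\<^sup>+ x. (if dist x y < r then ennreal \<bar>f y\<bar> else 0) \<partial>lborel) = (\<integral>\<^sup>+ x. ennreal \<bar>f y\<bar> * indicator (ball y r) x \<partial>lborel)"
      by (intro nn_integral_cong) (auto simp: indicator_def dist_commute)
    also have "\<dots> = ennreal \<bar>f y\<bar> * emeasure lborel (ball y r)"
      by (rule nn_integral_cmult_indicator) simp
    finally show "(\<integral>\<^sup>+ x. (if dist x y < r then ennreal \<bar>f y\<bar> else 0) \<partial>lborel) = ennreal \<bar>f y\<bar> * emeasure lborel (ball y r)" .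
  qed
  also have "\<dots> = (\<integral>\<^sup>+ y. ennreal (unit_ball_vol (DIM('a)) * r ^ DIM('a)) * ennreal \<bar>f y\<bar> \<partial>lborel)"
    using r by (simp add: emeasure_ball mult.commute)
  also have "\<dots> = ennreal (unit_ball_vol (DIM('a)) * r ^ DIM('a)) * (\<integral>\<^sup>+ y. ennreal \<bar>f y\<bar> \<partial>lborel)"
    by (rule nn_integral_cmult) measurable
  finally show ?thesis by simp
next
  case False
  hence "Floc f r x = 0" for x
  proof -
    have "\<not> dist x y < r" for y using False zero_le_dist[of x y] by linarith
    thus ?thesis unfolding Floc_def by simp
  qed
  thus ?thesis by simp
qed

lemma abs_B_le:
  fixes f g :: "real^'n \<Rightarrow> real"
  shows "ennreal \<bar>bilinear_spherical_avg f g x\<bar> \<le> Bp f g x"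
proof (cases "integrable (sphere_surface_measure :: ((real^'n) \<times> (real^'n)) measure) (\<lambda>u. f (x - fst u) * g (x - snd u))")
  case True
  have "ennreal (norm (\<integral>u. f (x - fst u) * g (x - snd u) \<partial>(sphere_surface_measure :: ((real^'n) \<times> (real^'n)) measure)))
     \<le> (\<integral>\<^sup>+u. norm (f (x - fst u) * g (x - snd u)) \<partial>(sphere_surface_measure :: ((real^'n) \<times> (real^'n)) measure))"
    by (rule integral_norm_bound_ennreal[OF True])
  thus ?thesis unfolding bilinear_spherical_avg_def Bp_def by (simp add: abs_mult)
next
  case False
  thus ?thesis unfolding bilinear_spherical_avg_def Bp_def by (simp add: not_integrable_integral_eq)
qed

theorem mainTheorem6:
  assumes "CARD('n) \<ge> 2"
    and "1/2 \<le> s" and "s \<le> 1"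
  shows "\<exists>C::real. \<forall>(f::real^'n \<Rightarrow> real) g.
           integrable lborel f \<longrightarrow> integrable lborel g \<longrightarrow>
           Ls_norm_pow s (bilinear_spherical_avg f g)
             \<le> ennreal ((C * L1_norm f * L1_norm g) powr s)"
proof -
  have D: "DIM(real^'n) \<ge> 2" using assms(1) by simp
  define K where "K = 2 * DIM(real^'n) * (unit_ball_vol (DIM(real^'n)) * DIM(real^'n) / 2 / 2)"
  define V where "V = unit_ball_vol (DIM(real^'n)) * 3 ^ DIM(real^'n)"
  have K0: "K \<ge> 0" unfolding K_def by simp
  have V0: "V > 0" unfolding V_def by simp
  have s0: "s > 0" using assms by simp
  define C where "C = (K + V) powr (1/s)"
  have Cs: "C powr s = K + V"
    unfolding C_def using s0 K0 V0 by (simp add: powr_powr)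
  have C0: "C \<ge> 0" unfolding C_def by simp
  show ?thesis
  proof (intro exI[of _ C] allI impI)
    fix f g :: "real^'n \<Rightarrow> real"
    assume fi: "integrable lborel f" and gi: "integrable lborel g"
    have [measurable]: "f \<in> borel_measurable borel" "g \<in> borel_measurable borel"
      using borel_measurable_integrable[OF fi] borel_measurable_integrable[OF gi] by auto
    define a where "a = L1_norm f"
    define bb where "bb = L1_norm g"
    have a0: "a \<ge> 0" unfolding a_def L1_norm_def by simp
    have bb0: "bb \<ge> 0" unfolding bb_def L1_norm_def by simp
    have nf: "(\<integral>\<^sup>+ y. ennreal \<bar>f y\<bar> \<partial>lborel) = ennreal a"
      unfolding a_def L1_norm_def by (rule nn_integral_eq_integral) (auto intro: integrable_abs fi)
    have ng: "(\<integral>\<^sup>+ y. ennreal \<bar>g y\<bar> \<partial>lborel) = ennreal bb"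
      unfolding bb_def L1_norm_def by (rule nn_integral_eq_integral) (auto intro: integrable_abs gi)
    have KB: "(\<integral>\<^sup>+ x. Bp f g x * inverse (Floc f 3 x) \<partial>lborel) \<le> ennreal K * ennreal bb"
      using key_bound[of f g, OF _ _ D] unfolding K_def ng by simp
    have FI: "(\<integral>\<^sup>+ x. Floc f 3 x \<partial>lborel) \<le> ennreal V * ennreal a"
      using Floc_integral[of f 3] unfolding V_def nf by simp
    have Fa: "Floc f 3 x \<le> ennreal a" for x
      using Floc_le[of f 3 x] unfolding nf .
    have absB: "ennreal \<bar>bilinear_spherical_avg f g x\<bar> \<le> Bp f g x" for x
      by (rule abs_B_le)
    show "Ls_norm_pow s (bilinear_spherical_avg f g) \<le> ennreal ((C * L1_norm f * L1_norm g) powr s)"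
    proof (cases "a > 0 \<and> bb > 0")
      case True
      define m where "m = a * bb"
      have m0: "m > 0" unfolding m_def using True by simp
      have "Ls_norm_pow s (bilinear_spherical_avg f g)
          \<le> (\<integral>\<^sup>+ x. ennreal (m powr s) * (ennreal (a/m) * (Bp f g x * inverse (Floc f 3 x)) + Floc f 3 x * ennreal (1/a)) \<partial>lborel)"
        unfolding Ls_norm_pow_def
        by (intro nn_integral_mono pointwise_bound[OF assms(2,3) _ absB Fa _ m0]) (use True in auto)
      also have "\<dots> = ennreal (m powr s) * (ennreal (a/m) * (\<integral>\<^sup>+ x. Bp f g x * inverse (Floc f 3 x) \<partial>lborel) + (\<integral>\<^sup>+ x. Floc f 3 x \<partial>lborel) * ennreal (1/a))"
        by (simp add: nn_integral_cmult nn_integral_add nn_integral_multc)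
      also have "\<dots> \<le> ennreal (m powr s) * (ennreal (a/m) * (ennreal K * ennreal bb) + (ennreal V * ennreal a) * ennreal (1/a))"
        by (intro mult_left_mono add_mono mult_right_mono KB FI) auto
      also have "\<dots> = ennreal (m powr s * (K + V))"
      proof -
        have "a/m * (K * bb) + V * a * (1/a) = K + V"
          using True unfolding m_def by (simp add: field_simps)
        hence "ennreal (m powr s * (K + V)) = ennreal (m powr s * (a/m * (K * bb) + V * a * (1/a)))" by simp
        also have "\<dots> = ennreal (m powr s) * (ennreal (a/m) * (ennreal K * ennreal bb) + (ennreal V * ennreal a) * ennreal (1/a))"
          using True m0 K0 V0 by (simp add: ennreal_mult[symmetric] ennreal_plus[symmetric] del: ennreal_plus)
        finally show ?thesis by simp
      qed
      also have "\<dots> = ennreal ((C * L1_norm f * L1_norm g) powr s)"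
      proof -
        have "(C * L1_norm f * L1_norm g) powr s = C powr s * m powr s"
          unfolding m_def a_def[symmetric] bb_def[symmetric] using C0 a0 bb0
          by (simp add: powr_mult mult.assoc)
        thus ?thesis using Cs by (simp add: mult.commute)
      qed
      finally show ?thesis .
    next
      case False
      have invF: "inverse (Floc f 3 x) \<noteq> 0" for x
        using Fa[of x] by (auto simp: top_unique)
      have AEB: "AE x in lborel. Bp f g x = 0"
      proof (cases "bb = 0")
        case True
        have "(\<integral>\<^sup>+ x. Bp f g x * inverse (Floc f 3 x) \<partial>lborel) = 0"
          using KB True by simp
        hence "AE x in lborel. Bp f g x * inverse (Floc f 3 x) = 0"
          by (subst (asm) nn_integral_0_iff_AE) measurable
        thus ?thesis
          by eventually_elim (use invF in auto)
      next
        case bbnz: False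
        hence a: "a = 0" using False a0 bb0 by auto
        have F0: "Floc f 3 x = 0" for x using Fa[of x] a by simp
        have "(\<integral>\<^sup>+ x. Bp f g x * inverse (Floc f 3 x) \<partial>lborel) \<noteq> \<infinity>"
          using KB by (auto simp: top_unique ennreal_mult_eq_top_iff)
        hence "AE x in lborel. Bp f g x * inverse (Floc f 3 x) \<noteq> \<infinity>"
          by (rule nn_integral_PInf_AE[rotated]) measurable
        thus ?thesis
          by eventually_elim (auto simp: F0 ennreal_mult_eq_top_iff)
      qed
      have "Ls_norm_pow s (bilinear_spherical_avg f g) = (\<integral>\<^sup>+ (x::real^'n). 0 \<partial>lborel)"
        unfolding Ls_norm_pow_def
      proof (rule nn_integral_cong_AE)
        show "AE x in lborel. ennreal (\<bar>bilinear_spherical_avg f g x\<bar> powr s) = 0"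
          using AEB
        proof eventually_elim
          fix x assume "Bp f g x = 0"
          hence "bilinear_spherical_avg f g x = 0" using absB[of x] by simp
          thus "ennreal (\<bar>bilinear_spherical_avg f g x\<bar> powr s) = 0" by simp
        qed
      qed
      thus ?thesis by simp
    qed
  qed
qed

end
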